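(* Let $k \ge 1$ and let $\tau_0, \tau_1, \ldots, \tau_t \in \{0,1\}^{2^k}$ be such that (1) for every $i \in \{1,\dots,t\}$, $\tau_i$ and $\tau_{i-1}$ differ in exactly one coordinate; (2) for every $i \in \{1,\dots,t\}$, $\mathrm{mem}(\tau_i)$ and $\mathrm{mem}(\tau_{i-1})$ differ in exactly one coordinate; and (3) $\mathrm{mem}(\tau_t) = \mathrm{mem}(\tau_0)$. Then $\tau_t = \tau_0$.
   Context: Index the coordinates of $\tau \in \{0,1\}^{2^k}$ by $J \in \{0,1,\dots,2^k-1\}$, and for such $J$ let $\mathrm{bin}(J) \in \{0,1\}^k$ be its binary representation, with coordinates indexed by $j \in \{0,\dots,k-1\}$ so that $J = \sum_j \mathrm{bin}(J)_j 2^j$. The map $\mathrm{mem}: \{0,1\}^{2^k} \to \{0,1\}^k$ is defined by $\mathrm{mem}(\tau)_j = \bigoplus_{J=0}^{2^k-1} \mathrm{bin}(J)_j \cdot \tau_J$ for each $j \in \{0,\dots,k-1\}$. *)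

theory Defs
  imports Main
begin

text \<open>Vectors in {0,1}^n are represented as bool lists of length n
  (True = 1). Coordinate J of tau is tau ! J; bin(J)_j is bit J j.\<close>

definition mem :: "nat \<Rightarrow> bool list \<Rightarrow> bool list" where
  "mem k \<tau> = map (\<lambda>j. odd (card {J. J < 2 ^ k \<and> bit J j \<and> \<tau> ! J})) [0..<k]"

definition differ_one :: "bool list \<Rightarrow> bool list \<Rightarrow> bool" where
  "differ_one x y \<longleftrightarrow> length x = length y \<and> card {i. i < length x \<and> x ! i \<noteq> y ! i} = 1"

end

theory Submission
  imports Defs
begin

lemma par:
  assumes "finite A"
  shows "(odd (card {J\<in>A. f J}) \<noteq> odd (card {J\<in>A. g J})) = odd (card {J\<in>A. f J \<noteq> g J})"
  using assms
proof (induction A rule: finite_induct)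
  case empty
  then show ?case by simp
next
  case (insert a A)
  have e: "\<And>P. {J\<in>insert a A. P J} = (if P a then insert a {J\<in>A. P J} else {J\<in>A. P J})"
    by auto
  have n: "\<And>P. a \<notin> {J\<in>A. P J}" using insert by auto
  have f: "\<And>P. finite {J\<in>A. P J}" using insert by auto
  show ?case using insert.IH
    by (simp only: e split: if_splits) (auto simp: card_insert_disjoint[OF f n])
qed

lemma memdiff:
  assumes "j < k"
  shows "(mem k x ! j \<noteq> mem k y ! j) = odd (card {J\<in>{..<2^k}. bit J j \<and> x!J \<noteq> y!J})"
proof -
  have "mem k x ! j = odd (card {J\<in>{J. J<2^k \<and> bit J j}. x!J})"
    using assms unfolding mem_def by (simp add: conj_assoc)
  moreover have "mem k y ! j = odd (card {J\<in>{J. J<2^k \<and> bit J j}. y!J})"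
    using assms unfolding mem_def by (simp add: conj_assoc)
  moreover have "{J\<in>{J. J<2^k \<and> bit J j}. x!J \<noteq> y!J} = {J\<in>{..<2^k}. bit J j \<and> x!J \<noteq> y!J}"
    by auto
  ultimately show ?thesis using par[of "{J. J<2^k \<and> bit J j}" "\<lambda>J. x!J" "\<lambda>J. y!J"] by simp
qed

lemma single_bit:
  assumes "(J0::nat) < 2^k" "bit J0 j" "\<And>j'. j' < k \<Longrightarrow> bit J0 j' \<Longrightarrow> j' = j"
  shows "J0 = 2^j"
proof -
  have hb: "\<And>n. \<not> n < k \<Longrightarrow> \<not> bit J0 n"
  proof -
    fix n assume "\<not> n < k"
    have "take_bit k J0 = J0" using assms(1) by (simp add: take_bit_nat_eq_self_iff)
    then show "\<not> bit J0 n" using \<open>\<not> n < k\<close> by (metis bit_take_bit_iff)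
  qed
  have "unset_bit j J0 = 0"
  proof (rule bit_eqI)
    fix n
    show "bit (unset_bit j J0) n = bit (0::nat) n"
    proof (cases "n < k")
      case True then show ?thesis using assms(3) by (auto simp: bit_unset_bit_iff)
    next
      case False
      then have "\<not> bit J0 n" using hb by blast
      then show ?thesis by (simp add: bit_unset_bit_iff)
    qed
  qed
  then have "set_bit j (unset_bit j J0) = 2^j" by (simp add: set_bit_def)
  moreover have "set_bit j (unset_bit j J0) = J0" using assms(2)
    by (intro bit_eqI) (auto simp: bit_set_bit_iff bit_unset_bit_iff)
  ultimately show ?thesis by simp
qed

lemma step_pow:
  assumes k1: "length x = 2^k" "length y = 2^k"
    and d1: "differ_one x y" and d2: "differ_one (mem k x) (mem k y)"
  obtains j where "j < k" "\<And>J. J < 2^k \<Longrightarrow> x!J \<noteq> y!J \<Longrightarrow> J = 2^j"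
proof -
  have "card {i. i < length x \<and> x ! i \<noteq> y ! i} = 1" using d1 unfolding differ_one_def by (elim conjE)
  then have "card {i. i < 2^k \<and> x ! i \<noteq> y ! i} = 1" unfolding k1(1) .
  then obtain J0 where J0: "{i. i < 2^k \<and> x ! i \<noteq> y ! i} = {J0}" by (rule card_1_singletonE)
  have J0k: "J0 < 2^k" using J0 by blast
  have J0m: "\<And>J. J < 2^k \<Longrightarrow> x!J \<noteq> y!J \<Longrightarrow> J = J0"
  proof -
    fix J assume "J < 2^k" "x!J \<noteq> y!J"
    then have "J \<in> {i. i < 2^k \<and> x ! i \<noteq> y ! i}" by simp
    then show "J = J0" unfolding J0 by simp
  qed
  have J0d: "x!J0 \<noteq> y!J0"
  proof -
    have "J0 \<in> {i. i < 2^k \<and> x ! i \<noteq> y ! i}" unfolding J0 by simp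
    then show ?thesis by simp
  qed
  have dj: "(mem k x ! j \<noteq> mem k y ! j) = bit J0 j" if "j < k" for j
  proof -
    have "{J\<in>{..<2^k}. bit J j \<and> x!J \<noteq> y!J} = (if bit J0 j then {J0} else {})"
    proof (cases "bit J0 j")
      case True
      have "{J\<in>{..<2^k}. bit J j \<and> x!J \<noteq> y!J} = {J0}"
      proof (intro equalityI subsetI)
        fix J assume "J \<in> {J\<in>{..<2^k}. bit J j \<and> x!J \<noteq> y!J}"
        then have "J < 2^k" "x!J \<noteq> y!J" by simp_all
        then show "J \<in> {J0}" using J0m by simp
      next
        fix J assume "J \<in> {J0}"
        then show "J \<in> {J\<in>{..<2^k}. bit J j \<and> x!J \<noteq> y!J}" using True J0k J0d by simp
      qed
      then show ?thesis using True by simp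
    next
      case False
      have "{J\<in>{..<2^k}. bit J j \<and> x!J \<noteq> y!J} = {}"
      proof (intro equalityI subsetI)
        fix J assume a: "J \<in> {J\<in>{..<2^k}. bit J j \<and> x!J \<noteq> y!J}"
        then have "J < 2^k" "x!J \<noteq> y!J" by simp_all
        then have "J = J0" using J0m by simp
        then show "J \<in> {}" using a False by simp
      qed simp
      then show ?thesis using False by simp
    qed
    then show ?thesis using memdiff[OF \<open>j < k\<close>, of x y] by simp
  qed
  have lm: "length (mem k x) = k" by (simp add: mem_def)
  have "card {i. i < length (mem k x) \<and> mem k x ! i \<noteq> mem k y ! i} = 1"
    using d2 unfolding differ_one_def by (elim conjE)
  then have "card {j. j < k \<and> mem k x ! j \<noteq> mem k y ! j} = 1" unfolding lm .
  moreover have "{j. j < k \<and> mem k x ! j \<noteq> mem k y ! j} = {j. j < k \<and> bit J0 j}" using dj by blast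
  ultimately have "card {j. j < k \<and> bit J0 j} = 1" by simp
  then obtain j where jj: "{j. j < k \<and> bit J0 j} = {j}" by (rule card_1_singletonE)
  have jk: "j < k" "bit J0 j"
  proof -
    have "j \<in> {j. j < k \<and> bit J0 j}" unfolding jj by simp
    then show "j < k" "bit J0 j" by simp_all
  qed
  have uj: "j' = j" if "j' < k" "bit J0 j'" for j'
  proof -
    have "j' \<in> {j. j < k \<and> bit J0 j}" using that by simp
    then show ?thesis unfolding jj by simp
  qed
  have "J0 = 2^j" by (rule single_bit[OF J0k jk(2) uj])
  then show ?thesis using that[OF jk(1)] J0m by simp
qed

theorem claim3p6:
  fixes k t :: nat and \<tau> :: "nat \<Rightarrow> bool list"
  assumes "k \<ge> 1"
    and "\<forall>i\<le>t. length (\<tau> i) = 2 ^ k"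
    and "\<forall>i\<in>{1..t}. differ_one (\<tau> i) (\<tau> (i - 1))"
    and "\<forall>i\<in>{1..t}. differ_one (mem k (\<tau> i)) (mem k (\<tau> (i - 1)))"
    and "mem k (\<tau> t) = mem k (\<tau> 0)"
  shows "\<tau> t = \<tau> 0"
proof -
  have inv: "\<forall>J<2^k. \<tau> i ! J \<noteq> \<tau> 0 ! J \<longrightarrow> (\<exists>j<k. J = 2^j)" if "i \<le> t" for i
    using that
  proof (induction i)
    case 0 then show ?case by simp
  next
    case (Suc i)
    have si: "Suc i \<in> {1..t}" using Suc.prems by simp
    have l1: "length (\<tau> (Suc i)) = 2^k" "length (\<tau> i) = 2^k" using assms(2) Suc.prems by auto
    have d1: "differ_one (\<tau> (Suc i)) (\<tau> i)" using assms(3) si by (metis diff_Suc_1)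
    have d2: "differ_one (mem k (\<tau> (Suc i))) (mem k (\<tau> i))" using assms(4) si by (metis diff_Suc_1)
    obtain j where j: "j < k" "\<And>J. J < 2^k \<Longrightarrow> \<tau> (Suc i)!J \<noteq> \<tau> i!J \<Longrightarrow> J = 2^j"
      using step_pow[OF l1 d1 d2] by blast
    have IH: "\<forall>J<2^k. \<tau> i ! J \<noteq> \<tau> 0 ! J \<longrightarrow> (\<exists>j<k. J = 2^j)" using Suc.IH Suc.prems by simp
    show ?case
    proof (intro allI impI)
      fix J assume "J < 2^k" "\<tau> (Suc i) ! J \<noteq> \<tau> 0 ! J"
      then show "\<exists>j<k. J = 2^j"
        using IH j by (cases "\<tau> i ! J = \<tau> 0 ! J") auto
    qed
  qed
  have "\<tau> t ! J = \<tau> 0 ! J" if "J < 2^k" for J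
  proof (rule ccontr)
    assume ne: "\<tau> t ! J \<noteq> \<tau> 0 ! J"
    have "\<exists>j<k. J = 2^j" using inv[of t] that ne by blast
    then obtain j where j: "j < k" "J = 2^j" by blast
    have "{J'\<in>{..<2^k}. bit J' j \<and> \<tau> t!J' \<noteq> \<tau> 0!J'} = {J}"
    proof (intro equalityI subsetI)
      fix J' assume "J' \<in> {J'\<in>{..<2^k}. bit J' j \<and> \<tau> t!J' \<noteq> \<tau> 0!J'}"
      then have h: "J' < 2^k" "bit J' j" "\<tau> t!J' \<noteq> \<tau> 0!J'" by auto
      then obtain j' where "J' = 2^j'" using inv[of t] by auto
      then show "J' \<in> {J}" using h(2) j by (auto simp: bit_exp_iff)
    next
      fix J' assume "J' \<in> {J}"
      then show "J' \<in> {J'\<in>{..<2^k}. bit J' j \<and> \<tau> t!J' \<noteq> \<tau> 0!J'}"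
        using ne that j by (auto simp: bit_exp_iff)
    qed
    then show False using memdiff[OF j(1), of "\<tau> t" "\<tau> 0"] assms(5) by simp
  qed
  then show ?thesis using assms(2) by (intro nth_equalityI) auto
qed

end
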